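(* Let $\beta>1$, $m=m(\beta)$, $\varepsilon>0$, and $J_{n,\varepsilon}:=\{m-\varepsilon\le|W_n|\le m+\varepsilon\}$. Let $s=s_n$, $S=S_n\subset[n]$ with $|S|=s$ and $A=A_n\ge0$ satisfy $As\ll n$. Then there is $C>0$ (depending on $\beta,\varepsilon$) such that for all sufficiently large $n$, $\mathbb P_{\beta,\mathbf Q^{\rm CW},\boldsymbol\mu_S(A)}(J_{n,\varepsilon}^c)\le e^{-Cn}$.
   Context: Ising model $\mathbb P_{\beta,\mathbf Q,\boldsymbol\mu}(\mathbf X=\mathbf x)=Z(\beta,\mathbf Q,\boldsymbol\mu)^{-1}\exp(\frac\beta2\mathbf x^\top\mathbf Q\mathbf x+\boldsymbol\mu^\top\mathbf x)$ on $\{-1,1\}^n$; $\mathbf Q^{\rm CW}_{ij}=\mathbf 1(i\ne j)/n$; $\boldsymbol\mu_S(A)$ has entries $A\mathbf 1(i\in S)$. Auxiliary variable: given $\mathbf X$, $W_n\sim N(\bar{\mathbf X},1/(n\beta))$. $m(\beta)$ is the unique positive root of $m=\tanh(\beta m)$. $a_n\ll b_n$ means $a_n/b_n\to0$. *)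

theory Defs
  imports "HOL-Probability.Probability"
begin

definition spins :: "nat \<Rightarrow> (nat \<Rightarrow> real) set" where
  "spins n = PiE {..<n} (\<lambda>_. {-1, 1})"

definition ising_weight ::
  "nat \<Rightarrow> real \<Rightarrow> (nat \<Rightarrow> nat \<Rightarrow> real) \<Rightarrow> (nat \<Rightarrow> real) \<Rightarrow> (nat \<Rightarrow> real) \<Rightarrow> real" where
  "ising_weight n \<beta> Q \<mu> x =
     exp (\<beta> / 2 * (\<Sum>i<n. \<Sum>j<n. Q i j * x i * x j) + (\<Sum>i<n. \<mu> i * x i))"

definition ising_Z :: "nat \<Rightarrow> real \<Rightarrow> (nat \<Rightarrow> nat \<Rightarrow> real) \<Rightarrow> (nat \<Rightarrow> real) \<Rightarrow> real" where
  "ising_Z n \<beta> Q \<mu> = (\<Sum>x\<in>spins n. ising_weight n \<beta> Q \<mu> x)"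

definition ising_prob ::
  "nat \<Rightarrow> real \<Rightarrow> (nat \<Rightarrow> nat \<Rightarrow> real) \<Rightarrow> (nat \<Rightarrow> real) \<Rightarrow> (nat \<Rightarrow> real) \<Rightarrow> real" where
  "ising_prob n \<beta> Q \<mu> x = ising_weight n \<beta> Q \<mu> x / ising_Z n \<beta> Q \<mu>"

definition Q_CW :: "nat \<Rightarrow> nat \<Rightarrow> nat \<Rightarrow> real" where
  "Q_CW n i j = (if i \<noteq> j then 1 / real n else 0)"

definition mu_S :: "nat set \<Rightarrow> real \<Rightarrow> nat \<Rightarrow> real" where
  "mu_S S A i = (if i \<in> S then A else 0)"

definition spin_mean :: "nat \<Rightarrow> (nat \<Rightarrow> real) \<Rightarrow> real" where
  "spin_mean n x = (\<Sum>i<n. x i) / real n"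

text \<open>Probability that W_n lies in B under the joint law of (X, W_n):
  X ~ Ising(beta,Q,mu), and given X, W_n ~ N(mean X, 1/(n beta)).\<close>
definition W_prob ::
  "nat \<Rightarrow> real \<Rightarrow> (nat \<Rightarrow> nat \<Rightarrow> real) \<Rightarrow> (nat \<Rightarrow> real) \<Rightarrow> real set \<Rightarrow> real" where
  "W_prob n \<beta> Q \<mu> B =
     (\<Sum>x\<in>spins n. ising_prob n \<beta> Q \<mu> x *
        measure (density lborel (normal_density (spin_mean n x) (sqrt (1 / (real n * \<beta>))))) B)"

definition m_beta :: "real \<Rightarrow> real" where
  "m_beta \<beta> = (THE m. m > 0 \<and> m = tanh (\<beta> * m))"

end

theory Submission
  imports Defs
begin


definition hh :: "real \<Rightarrow> real \<Rightarrow> real" where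
  "hh \<beta> t = t - tanh (\<beta> * t)"

lemma hh_deriv: "DERIV (hh \<beta>) t :> 1 - \<beta> * (1 - tanh (\<beta> * t)^2)"
  unfolding hh_def[abs_def]
  by (rule derivative_eq_intros refl | simp)+

lemma hh_cont: "continuous_on X (hh \<beta>)"
  using hh_deriv by (meson DERIV_isCont continuous_at_imp_continuous_on)

lemma hh_ge1: "t \<ge> 1 \<Longrightarrow> hh \<beta> t > 0"
  unfolding hh_def using tanh_real_lt_1[of "\<beta>*t"] by linarith

lemma hh_small:
  assumes "\<beta> > 1" shows "\<exists>d>0. \<forall>e. 0 < e \<and> e < d \<longrightarrow> hh \<beta> e < 0"
proof -
  have "DERIV (hh \<beta>) 0 :> 1 - \<beta>" using hh_deriv[of \<beta> 0] by simp
  from DERIV_neg_dec_right[OF this] assms obtain d where "d>0" "\<forall>h>0. h < d \<longrightarrow> hh \<beta> 0 > hh \<beta> (0 + h)" by auto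
  then show ?thesis by (auto simp: hh_def)
qed

lemma hh_unique:
  assumes "\<beta> > 1" "0 < a" "a < b" "hh \<beta> a = 0" "hh \<beta> b = 0" shows False
proof -
  have dif: "\<And>x. hh \<beta> differentiable (at x)" using hh_deriv real_differentiable_def by blast
  obtain z1 where z1: "0 < z1" "z1 < a" "DERIV (hh \<beta>) z1 :> 0"
    using Rolle[of 0 a "hh \<beta>"] assms hh_cont dif by (auto simp: hh_def)
  obtain z2 where z2: "a < z2" "z2 < b" "DERIV (hh \<beta>) z2 :> 0"
    using Rolle[of a b "hh \<beta>"] assms hh_cont dif by auto
  have e1: "1 - \<beta> * (1 - tanh (\<beta> * z1)^2) = 0" using DERIV_unique[OF hh_deriv z1(3)] .
  have e2: "1 - \<beta> * (1 - tanh (\<beta> * z2)^2) = 0" using DERIV_unique[OF hh_deriv z2(3)] .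
  have "tanh (\<beta> * z1) < tanh (\<beta> * z2)" using z1 z2 assms by simp
  moreover have "tanh (\<beta> * z1) > 0" using z1 assms by simp
  ultimately have "tanh (\<beta> * z1)^2 < tanh (\<beta> * z2)^2"
    by (simp add: power_strict_mono)
  with e1 e2 assms show False
    by (smt (verit, ccfv_SIG) mult_less_cancel_left_pos)
qed

lemma hh_exists:
  assumes "\<beta> > 1" shows "\<exists>m>0. hh \<beta> m = 0"
proof -
  obtain d where d: "d>0" "\<forall>e. 0 < e \<and> e < d \<longrightarrow> hh \<beta> e < 0" using hh_small[OF assms] by blast
  define t0 where "t0 = min (d/2) (1/2)"
  have t0: "0 < t0" "t0 < d" "t0 \<le> 1" using d by (auto simp: t0_def)
  have "hh \<beta> t0 < 0" using d t0 by auto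
  moreover have "hh \<beta> 1 > 0" using hh_ge1 by simp
  ultimately obtain x where "t0 \<le> x" "x \<le> 1" "hh \<beta> x = 0"
    using IVT'[of "hh \<beta>" t0 0 1] t0 hh_cont by force
  then show ?thesis using t0 by (intro exI[of _ x]) auto
qed

lemma m_beta_props:
  assumes "\<beta> > 1"
  shows "m_beta \<beta> > 0" "hh \<beta> (m_beta \<beta>) = 0" "\<And>t. t > 0 \<Longrightarrow> hh \<beta> t = 0 \<Longrightarrow> t = m_beta \<beta>"
proof -
  have ex1: "\<exists>!m. m > 0 \<and> m = tanh (\<beta> * m)"
  proof -
    obtain m where "m>0" "hh \<beta> m = 0" using hh_exists[OF assms] by blast
    moreover have "\<And>t. t>0 \<Longrightarrow> hh \<beta> t = 0 \<Longrightarrow> t = m"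
      using hh_unique[OF assms] calculation by (metis linorder_neqE_linordered_idom)
    ultimately show ?thesis unfolding hh_def by (metis diff_eq_eq diff_self)
  qed
  have th: "m_beta \<beta> > 0 \<and> m_beta \<beta> = tanh (\<beta> * m_beta \<beta>)"
    unfolding m_beta_def using theI'[OF ex1] .
  then show "m_beta \<beta> > 0" "hh \<beta> (m_beta \<beta>) = 0" by (auto simp: hh_def)
  show "\<And>t. t > 0 \<Longrightarrow> hh \<beta> t = 0 \<Longrightarrow> t = m_beta \<beta>"
    using ex1 th unfolding hh_def by (metis diff_eq_eq diff_self)
qed

lemma hh_neg:
  assumes "\<beta> > 1" "0 < t" "t < m_beta \<beta>" shows "hh \<beta> t < 0"
proof (rule ccontr)
  assume "\<not> ?thesis"
  hence ge: "hh \<beta> t \<ge> 0" by simp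
  obtain d where d: "d>0" "\<forall>e. 0 < e \<and> e < d \<longrightarrow> hh \<beta> e < 0" using hh_small[OF assms(1)] by blast
  define s where "s = min (d/2) (t/2)"
  have s: "0 < s" "s < d" "s \<le> t" using d assms by (auto simp: s_def)
  have "hh \<beta> s < 0" using d s by auto
  then obtain x where "s \<le> x" "x \<le> t" "hh \<beta> x = 0"
    using IVT'[of "hh \<beta>" s 0 t, OF less_imp_le ge \<open>s \<le> t\<close> hh_cont] by blast
  then have "x = m_beta \<beta>" using m_beta_props(3)[OF assms(1), of x] s by linarith
  then show False using \<open>x \<le> t\<close> assms by linarith
qed

lemma hh_pos:
  assumes "\<beta> > 1" "m_beta \<beta> < t" shows "hh \<beta> t > 0"
proof (rule ccontr)
  assume "\<not> ?thesis"
  hence ge: "hh \<beta> t \<le> 0" by simp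
  have "t+1 \<ge> 1" using m_beta_props(1)[OF assms(1)] assms by linarith
  hence pos1: "hh \<beta> (t+1) > 0" by (rule hh_ge1)
  have "\<exists>x. t \<le> x \<and> x \<le> t+1 \<and> hh \<beta> x = 0"
    by (rule IVT') (use ge pos1 hh_cont in auto)
  then obtain x where "t \<le> x" "x \<le> t+1" "hh \<beta> x = 0" by blast
  then have "x = m_beta \<beta>" using m_beta_props(3)[OF assms(1), of x] m_beta_props(1)[OF assms(1)] assms by linarith
  then show False using \<open>t \<le> x\<close> assms by linarith
qed

definition phi :: "real \<Rightarrow> real \<Rightarrow> real" where
  "phi \<beta> t = \<beta> * t^2 / 2 - ln (cosh (\<beta> * t))"

lemma phi_deriv: "DERIV (phi \<beta>) t :> \<beta> * hh \<beta> t"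
proof -
  have d1: "((\<lambda>z. \<beta>*z^2/2) has_real_derivative \<beta>*t) (at t)"
    by (auto intro!: derivative_eq_intros)
  have d2: "((\<lambda>z. ln (cosh (\<beta>*z))) has_real_derivative \<beta> * tanh (\<beta>*t)) (at t)"
    by (auto intro!: derivative_eq_intros simp: tanh_def)
  have "DERIV (phi \<beta>) t :> \<beta>*t - \<beta> * tanh (\<beta>*t)"
    unfolding phi_def[abs_def] by (rule DERIV_diff[OF d1 d2])
  then show ?thesis by (simp add: hh_def algebra_simps)
qed

lemma phi_cont: "continuous_on X (phi \<beta>)"
  using phi_deriv by (meson DERIV_isCont continuous_at_imp_continuous_on)

lemma phi_even: "phi \<beta> (-t) = phi \<beta> t"
  unfolding phi_def by simp

lemma phi_dec:
  assumes "\<beta> > 1" "0 \<le> a" "a < b" "b \<le> m_beta \<beta>" shows "phi \<beta> b < phi \<beta> a"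
proof (rule DERIV_neg_imp_decreasing_open[OF assms(3)])
  fix x assume x: "a < x" "x < b"
  have "hh \<beta> x < 0" using hh_neg[OF assms(1), of x] x assms by linarith
  hence "\<beta> * hh \<beta> x < 0" using assms(1) by (simp add: mult_pos_neg)
  thus "\<exists>y. DERIV (phi \<beta>) x :> y \<and> y < 0" using phi_deriv by blast
qed (rule phi_cont)

lemma phi_inc:
  assumes "\<beta> > 1" "m_beta \<beta> \<le> a" "a < b" shows "phi \<beta> a < phi \<beta> b"
proof (rule DERIV_pos_imp_increasing_open[OF assms(3)])
  fix x assume x: "a < x" "x < b"
  have "hh \<beta> x > 0" using hh_pos[OF assms(1), of x] x assms by linarith
  hence "\<beta> * hh \<beta> x > 0" using assms(1) by simp
  thus "\<exists>y. DERIV (phi \<beta>) x :> y \<and> y > 0" using phi_deriv by blast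
qed (rule phi_cont)




lemma phi_abs: "phi \<beta> \<bar>w\<bar> = phi \<beta> w"
  by (cases "w \<ge> 0") (auto simp: phi_even)

lemma gap:
  assumes "\<beta> > 1" "\<epsilon> > 0"
  shows "\<exists>\<eta>>0. \<forall>w. \<not> (m_beta \<beta> - \<epsilon> \<le> \<bar>w\<bar> \<and> \<bar>w\<bar> \<le> m_beta \<beta> + \<epsilon>) \<longrightarrow> phi \<beta> w \<ge> phi \<beta> (m_beta \<beta>) + \<eta>"
proof -
  define m where "m = m_beta \<beta>"
  have m0: "m > 0" using m_beta_props(1)[OF assms(1)] by (simp add: m_def)
  define a where "a = max 0 (m - \<epsilon>)"
  have a: "0 \<le> a" "a < m" using m0 assms by (auto simp: a_def)
  have p1: "phi \<beta> m < phi \<beta> (m+\<epsilon>)" using phi_inc[OF assms(1), of m "m+\<epsilon>"] assms by (simp add: m_def)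
  have p2: "phi \<beta> m < phi \<beta> a" using phi_dec[OF assms(1) a(1) a(2)] by (simp add: m_def)
  define \<eta> where "\<eta> = min (phi \<beta> (m+\<epsilon>) - phi \<beta> m) (phi \<beta> a - phi \<beta> m)"
  have "\<eta> > 0" using p1 p2 by (simp add: \<eta>_def)
  moreover have "phi \<beta> w \<ge> phi \<beta> m + \<eta>" if w: "\<not> (m - \<epsilon> \<le> \<bar>w\<bar> \<and> \<bar>w\<bar> \<le> m + \<epsilon>)" for w
  proof (cases "\<bar>w\<bar> > m + \<epsilon>")
    case True
    have "phi \<beta> (m+\<epsilon>) < phi \<beta> \<bar>w\<bar>" using phi_inc[OF assms(1), of "m+\<epsilon>" "\<bar>w\<bar>"] True assms by (simp add: m_def)
    then show ?thesis using phi_abs[of \<beta> w] by (simp add: \<eta>_def)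
  next
    case False
    hence lt: "\<bar>w\<bar> < m - \<epsilon>" using w by linarith
    hence aeq: "a = m - \<epsilon>" by (simp add: a_def)
    have "phi \<beta> a < phi \<beta> \<bar>w\<bar>" using phi_dec[OF assms(1), of "\<bar>w\<bar>" a] lt aeq assms by (simp add: m_def)
    then show ?thesis using phi_abs[of \<beta> w] by (simp add: \<eta>_def)
  qed
  ultimately show ?thesis unfolding m_def by blast
qed

lemma near:
  assumes "\<eta> > 0"
  shows "\<exists>\<delta>>0. \<delta> \<le> 1 \<and> (\<forall>t. m \<le> t \<and> t \<le> m + \<delta> \<longrightarrow> phi \<beta> t \<le> phi \<beta> m + \<eta>)"
proof -
  have "isCont (phi \<beta>) m" using phi_deriv by (rule DERIV_isCont)
  then obtain d where d: "d > 0" "\<forall>x'. dist x' m < d \<longrightarrow> dist (phi \<beta> x') (phi \<beta> m) < \<eta>"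
    using assms unfolding continuous_at_eps_delta by blast
  define \<delta> where "\<delta> = min 1 (d/2)"
  have "\<delta> > 0" "\<delta> \<le> 1" using d by (auto simp: \<delta>_def)
  moreover have "phi \<beta> t \<le> phi \<beta> m + \<eta>" if "m \<le> t" "t \<le> m + \<delta>" for t
  proof -
    have "dist t m < d" using that d by (auto simp: dist_real_def \<delta>_def)
    then have "dist (phi \<beta> t) (phi \<beta> m) < \<eta>" using d by blast
    then show ?thesis by (simp add: dist_real_def)
  qed
  ultimately show ?thesis by blast
qed

lemma exp_neg_phi_eq:
  assumes "\<beta> > 0"
  shows "exp (- phi \<beta> t) = exp (\<beta>/2) / 2 * sqrt (2*pi/\<beta>) *
     (normal_density 1 (1/sqrt \<beta>) t + normal_density (-1) (1/sqrt \<beta>) t)"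
proof -
  have s2: "(1/sqrt \<beta>)^2 = 1/\<beta>" using assms by (simp add: power_divide)
  have k: "sqrt (2*pi/\<beta>) * (1 / sqrt (2 * pi * (1/\<beta>))) = 1"
    using assms by simp
  have nd: "normal_density c (1/sqrt \<beta>) t = 1 / sqrt (2 * pi * (1/\<beta>)) * exp (- (\<beta> * (t - c)^2 / 2))" for c
    unfolding normal_density_def s2 using assms by (simp add: field_simps)
  have "exp (- phi \<beta> t) = exp (ln (cosh (\<beta>*t)) - \<beta>*t^2/2)"
    unfolding phi_def by simp
  also have "\<dots> = cosh (\<beta>*t) / exp (\<beta>*t^2/2)"
    by (simp only: exp_diff exp_ln[OF cosh_real_pos])
  also have "\<dots> = exp (- (\<beta>*t^2/2)) * cosh (\<beta>*t)"
    by (simp only: exp_minus divide_inverse mult.commute)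
  also have "\<dots> = exp (- (\<beta>*t^2/2)) * (exp (\<beta>*t) + exp (-(\<beta>*t))) / 2"
    by (simp add: cosh_field_def)
  also have "\<dots> = exp (\<beta>/2) / 2 * (exp (- (\<beta> * (t - 1)^2 / 2)) + exp (- (\<beta> * (t - (-1))^2 / 2)))"
    by (simp add: exp_add[symmetric] distrib_left power2_eq_square algebra_simps add_divide_distrib diff_divide_distrib)
  also have "\<dots> = exp (\<beta>/2) / 2 * (sqrt (2*pi/\<beta>) * (1 / sqrt (2 * pi * (1/\<beta>)))) * (exp (- (\<beta> * (t - 1)^2 / 2)) + exp (- (\<beta> * (t - (-1))^2 / 2)))"
    by (simp only: k)
  also have "\<dots> = exp (\<beta>/2) / 2 * sqrt (2*pi/\<beta>) *
     (normal_density 1 (1/sqrt \<beta>) t + normal_density (-1) (1/sqrt \<beta>) t)"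
    unfolding nd by (simp add: algebra_simps)
  finally show ?thesis .
qed

lemma integrable_exp_neg_phi:
  assumes "\<beta> > 0"
  shows "integrable lborel (\<lambda>t. exp (- phi \<beta> t))"
proof -
  have "integrable lborel (\<lambda>t. exp (\<beta>/2) / 2 * sqrt (2*pi/\<beta>) *
     (normal_density 1 (1/sqrt \<beta>) t + normal_density (-1) (1/sqrt \<beta>) t))"
    by (intro integrable_mult_right Bochner_Integration.integrable_add integrable_normal_density) (use assms in auto)
  then show ?thesis by (simp only: exp_neg_phi_eq[OF assms])
qed




lemma spins_pm: "x \<in> spins n \<Longrightarrow> i < n \<Longrightarrow> x i = -1 \<or> x i = 1"
  by (auto simp: spins_def PiE_iff)

lemma spins_sq: "x \<in> spins n \<Longrightarrow> i < n \<Longrightarrow> x i * x i = 1"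
  using spins_pm by fastforce

lemma spins_abs: "x \<in> spins n \<Longrightarrow> i < n \<Longrightarrow> \<bar>x i\<bar> = 1"
  using spins_pm by fastforce

lemma finite_spins: "finite (spins n)"
  unfolding spins_def by (intro finite_PiE) auto

lemma Qsum:
  assumes "x \<in> spins n"
  shows "(\<Sum>i<n. \<Sum>j<n. Q_CW n i j * x i * x j) = ((\<Sum>i<n. x i)^2 - real n) / real n"
proof -
  have inner: "(\<Sum>j<n. Q_CW n i j * x i * x j) = (x i * (\<Sum>j<n. x j) - 1) / real n" if i: "i < n" for i
  proof -
    have "(\<Sum>j<n. Q_CW n i j * x i * x j) = (\<Sum>j<n. x i * x j / real n - (if j = i then x i * x j / real n else 0))"
      by (rule sum.cong) (auto simp: Q_CW_def)
    also have "\<dots> = (\<Sum>j<n. x i * x j / real n) - x i * x i / real n"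
      using i by (simp add: sum_subtractf)
    also have "\<dots> = (x i * (\<Sum>j<n. x j) - 1) / real n"
      using spins_sq[OF assms i] by (simp add: sum_divide_distrib[symmetric] sum_distrib_left diff_divide_distrib)
    finally show ?thesis .
  qed
  have "(\<Sum>i<n. \<Sum>j<n. Q_CW n i j * x i * x j) = (\<Sum>i<n. (x i * (\<Sum>j<n. x j) - 1) / real n)"
    using inner by (intro sum.cong) auto
  also have "\<dots> = ((\<Sum>i<n. x i) * (\<Sum>j<n. x j) - real n) / real n"
    by (simp add: sum_divide_distrib[symmetric] sum_subtractf sum_distrib_right)
  finally show ?thesis by (simp add: power2_eq_square)
qed

lemma weight_normal:
  assumes "n > 0" "\<beta> > 0" "x \<in> spins n"
  shows "ising_weight n \<beta> (Q_CW n) \<mu> x * normal_density (spin_mean n x) (sqrt (1/(real n*\<beta>))) t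
    = 1 / sqrt (2*pi/(real n*\<beta>)) * exp (- \<beta>/2 - real n*\<beta>*t^2/2 + (\<Sum>i<n. (\<beta>*t + \<mu> i) * x i))"
proof -
  define S where "S = (\<Sum>i<n. x i)"
  define M where "M = (\<Sum>i<n. \<mu> i * x i)"
  have L: "(\<Sum>i<n. (\<beta>*t + \<mu> i) * x i) = \<beta>*t*S + M"
    by (simp add: S_def M_def distrib_right sum.distrib sum_distrib_left mult.assoc)
  have s2: "(sqrt (1/(real n*\<beta>)))^2 = 1/(real n*\<beta>)" using assms by simp
  have w: "ising_weight n \<beta> (Q_CW n) \<mu> x = exp (\<beta>/2 * ((S^2 - real n)/real n) + M)"
    unfolding ising_weight_def Qsum[OF assms(3)] S_def M_def ..
  have nd: "normal_density (spin_mean n x) (sqrt (1/(real n*\<beta>))) t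
      = 1 / sqrt (2*pi/(real n*\<beta>)) * exp (- ((t - S/real n)\<^sup>2) / (2 * (1/(real n*\<beta>))))"
    unfolding normal_density_def s2 spin_mean_def S_def by simp
  have ar: "\<beta>/2 * ((S^2 - real n)/real n) + M + (- ((t - S/real n)\<^sup>2) / (2 * (1/(real n*\<beta>))))
      = - \<beta>/2 - real n*\<beta>*t^2/2 + (\<beta>*t*S + M)"
    using assms by (simp add: field_simps power2_eq_square)
  have "ising_weight n \<beta> (Q_CW n) \<mu> x * normal_density (spin_mean n x) (sqrt (1/(real n*\<beta>))) t
     = 1 / sqrt (2*pi/(real n*\<beta>)) * exp (\<beta>/2 * ((S^2 - real n)/real n) + M + (- ((t - S/real n)\<^sup>2) / (2 * (1/(real n*\<beta>)))))"
  proof -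
    have gen: "\<And>W N k::real. exp W * (k * exp N) = k * exp (W + N)" by (simp add: exp_add)
    show ?thesis unfolding w nd by (rule gen)
  qed
  also have "\<dots> = 1 / sqrt (2*pi/(real n*\<beta>)) * exp (- \<beta>/2 - real n*\<beta>*t^2/2 + (\<Sum>i<n. (\<beta>*t + \<mu> i) * x i))"
    unfolding ar L ..
  finally show ?thesis .
qed

lemma sumexp: "(\<Sum>x\<in>spins n. exp (c * (\<Sum>i<n. x i))) = (2 * cosh c)^n"
proof -
  have "(\<Sum>x\<in>spins n. exp (c * (\<Sum>i<n. x i))) = (\<Sum>x\<in>spins n. \<Prod>i<n. exp (c * x i))"
    by (simp add: sum_distrib_left exp_sum)
  also have "\<dots> = (\<Prod>i<n. \<Sum>y\<in>{-1,1}. exp (c*y))"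
    unfolding spins_def by (rule prod_sum_PiE[symmetric]) auto
  also have "\<dots> = (\<Prod>i<n. 2 * cosh c)"
  proof -
    have "2 * cosh c = exp c + exp (-c)" by (simp add: cosh_field_def)
    then show ?thesis by (simp add: add.commute)
  qed
  finally show ?thesis by simp
qed

lemma sumexp_bounds:
  assumes "a = (\<Sum>i<n. \<bar>\<mu> i\<bar>)"
  shows "exp (-a) * (2 * cosh c)^n \<le> (\<Sum>x\<in>spins n. exp (\<Sum>i<n. (c + \<mu> i) * x i))"
    "(\<Sum>x\<in>spins n. exp (\<Sum>i<n. (c + \<mu> i) * x i)) \<le> exp a * (2 * cosh c)^n"
proof -
  have eq: "exp (\<Sum>i<n. (c + \<mu> i) * x i) = exp (\<Sum>i<n. \<mu> i * x i) * exp (c * (\<Sum>i<n. x i))" for x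
    by (simp add: distrib_right sum.distrib sum_distrib_left exp_add[symmetric] add.commute)
  have bd: "\<bar>\<Sum>i<n. \<mu> i * x i\<bar> \<le> a" if x: "x \<in> spins n" for x
  proof -
    have "\<bar>\<Sum>i<n. \<mu> i * x i\<bar> \<le> (\<Sum>i<n. \<bar>\<mu> i * x i\<bar>)" by (rule sum_abs)
    also have "\<dots> = a" unfolding assms using spins_abs[OF x] by (intro sum.cong) (auto simp: abs_mult)
    finally show ?thesis .
  qed
  have lo: "exp (-a) * exp (c * (\<Sum>i<n. x i)) \<le> exp (\<Sum>i<n. (c + \<mu> i) * x i)" if "x \<in> spins n" for x
    unfolding eq using bd[OF that] by (intro mult_right_mono) auto
  have hi: "exp (\<Sum>i<n. (c + \<mu> i) * x i) \<le> exp a * exp (c * (\<Sum>i<n. x i))" if "x \<in> spins n" for x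
    unfolding eq using bd[OF that] by (intro mult_right_mono) auto
  have e1: "exp (-a) * (2 * cosh c)^n = (\<Sum>x\<in>spins n. exp (-a) * exp (c * (\<Sum>i<n. x i)))"
    by (subst sumexp[symmetric]) (rule sum_distrib_left)
  have e2: "exp a * (2 * cosh c)^n = (\<Sum>x\<in>spins n. exp a * exp (c * (\<Sum>i<n. x i)))"
    by (subst sumexp[symmetric]) (rule sum_distrib_left)
  show "exp (-a) * (2 * cosh c)^n \<le> (\<Sum>x\<in>spins n. exp (\<Sum>i<n. (c + \<mu> i) * x i))"
    unfolding e1 using lo by (intro sum_mono) auto
  show "(\<Sum>x\<in>spins n. exp (\<Sum>i<n. (c + \<mu> i) * x i)) \<le> exp a * (2 * cosh c)^n"
    unfolding e2 using hi by (intro sum_mono) auto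
qed

lemma exp_nphi: "exp (- real n * phi \<beta> t) = exp (- (real n*\<beta>*t^2/2)) * cosh (\<beta>*t)^n"
proof -
  have "exp (- real n * phi \<beta> t) = exp (- (real n*\<beta>*t^2/2) + real n * ln (cosh (\<beta>*t)))"
    by (simp add: phi_def algebra_simps)
  also have "\<dots> = exp (- (real n*\<beta>*t^2/2)) * exp (real n * ln (cosh (\<beta>*t)))"
    by (rule exp_add)
  also have "exp (real n * ln (cosh (\<beta>*t))) = cosh (\<beta>*t)^n"
    by (simp add: exp_of_nat_mult)
  finally show ?thesis .
qed

definition G :: "nat \<Rightarrow> real \<Rightarrow> (nat \<Rightarrow> real) \<Rightarrow> real \<Rightarrow> real" where
  "G n \<beta> \<mu> t = (\<Sum>x\<in>spins n. ising_weight n \<beta> (Q_CW n) \<mu> x * normal_density (spin_mean n x) (sqrt (1/(real n*\<beta>))) t)"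

definition KK :: "nat \<Rightarrow> real \<Rightarrow> real" where
  "KK n \<beta> = 1 / sqrt (2*pi/(real n*\<beta>)) * exp (- \<beta>/2) * 2^n"

lemma G_bounds:
  assumes "n > 0" "\<beta> > 0" "a = (\<Sum>i<n. \<bar>\<mu> i\<bar>)"
  shows "KK n \<beta> * exp (-a) * exp (- real n * phi \<beta> t) \<le> G n \<beta> \<mu> t"
        "G n \<beta> \<mu> t \<le> KK n \<beta> * exp a * exp (- real n * phi \<beta> t)"
proof -
  define c where "c = 1 / sqrt (2*pi/(real n*\<beta>)) * exp (- \<beta>/2 - real n*\<beta>*t^2/2)"
  have c0: "c \<ge> 0" using assms by (simp add: c_def)
  have "G n \<beta> \<mu> t = (\<Sum>x\<in>spins n. c * exp (\<Sum>i<n. (\<beta>*t + \<mu> i) * x i))"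
    unfolding G_def using weight_normal[OF assms(1,2)]
    by (intro sum.cong) (auto simp: c_def exp_add[symmetric])
  also have "\<dots> = c * (\<Sum>x\<in>spins n. exp (\<Sum>i<n. (\<beta>*t + \<mu> i) * x i))"
    by (simp add: sum_distrib_left)
  finally have Geq: "G n \<beta> \<mu> t = \<dots>" .
  have ex: "exp (- \<beta>/2 - real n*\<beta>*t^2/2) = exp (- \<beta>/2) * exp (- (real n*\<beta>*t^2/2))"
    by (subst exp_add[symmetric]) simp
  have ceq: "c * (2 * cosh (\<beta>*t))^n = KK n \<beta> * exp (- real n * phi \<beta> t)"
    unfolding exp_nphi c_def KK_def ex by (simp add: power_mult_distrib mult_ac)
  show "KK n \<beta> * exp (-a) * exp (- real n * phi \<beta> t) \<le> G n \<beta> \<mu> t"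
  proof -
    have "KK n \<beta> * exp (-a) * exp (- real n * phi \<beta> t) = exp (-a) * (c * (2 * cosh (\<beta>*t))^n)"
      unfolding ceq by (simp add: mult_ac)
    also have "\<dots> = c * (exp (-a) * (2 * cosh (\<beta>*t))^n)" by (simp add: mult_ac)
    also have "\<dots> \<le> c * (\<Sum>x\<in>spins n. exp (\<Sum>i<n. (\<beta>*t + \<mu> i) * x i))"
      by (rule mult_left_mono[OF sumexp_bounds(1)[OF assms(3)] c0])
    finally show ?thesis unfolding Geq .
  qed
  show "G n \<beta> \<mu> t \<le> KK n \<beta> * exp a * exp (- real n * phi \<beta> t)"
  proof -
    have "c * (\<Sum>x\<in>spins n. exp (\<Sum>i<n. (\<beta>*t + \<mu> i) * x i)) \<le> c * (exp a * (2 * cosh (\<beta>*t))^n)"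
      by (rule mult_left_mono[OF sumexp_bounds(2)[OF assms(3)] c0])
    also have "\<dots> = exp a * (c * (2 * cosh (\<beta>*t))^n)" by (simp add: mult_ac)
    also have "\<dots> = KK n \<beta> * exp a * exp (- real n * phi \<beta> t)"
      unfolding ceq by (simp add: mult_ac)
    finally show ?thesis unfolding Geq .
  qed
qed




lemma P_eq:
  assumes "n > 0" "\<beta> > 0" "E \<in> sets borel"
  shows "ennreal (\<Sum>x\<in>spins n. ising_weight n \<beta> (Q_CW n) \<mu> x *
            measure (density lborel (normal_density (spin_mean n x) (sqrt (1 / (real n * \<beta>))))) E)
     = (\<integral>\<^sup>+ t. ennreal (G n \<beta> \<mu> t) * indicator E t \<partial>lborel)"
proof -
  define \<sigma> where "\<sigma> = sqrt (1 / (real n * \<beta>))"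
  have sp: "\<sigma> > 0" using assms by (simp add: \<sigma>_def)
  have E: "E \<in> sets lborel" using assms(3) by simp
  have em: "ennreal (measure (density lborel (normal_density c \<sigma>)) E)
      = (\<integral>\<^sup>+ t. ennreal (normal_density c \<sigma> t) * indicator E t \<partial>lborel)" for c
  proof -
    interpret prob_space "density lborel (normal_density c \<sigma>)" using sp by (rule prob_space_normal_density)
    have "ennreal (measure (density lborel (normal_density c \<sigma>)) E) = emeasure (density lborel (normal_density c \<sigma>)) E"
      by (simp add: emeasure_eq_measure)
    also have "\<dots> = (\<integral>\<^sup>+ t. ennreal (normal_density c \<sigma> t) * indicator E t \<partial>lborel)"
      by (rule emeasure_density) (use E in auto)
    finally show ?thesis .
  qed
  have wnn: "0 \<le> ising_weight n \<beta> (Q_CW n) \<mu> x" for x by (simp add: ising_weight_def)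
  have "ennreal (\<Sum>x\<in>spins n. ising_weight n \<beta> (Q_CW n) \<mu> x *
            measure (density lborel (normal_density (spin_mean n x) \<sigma>)) E)
      = (\<Sum>x\<in>spins n. ennreal (ising_weight n \<beta> (Q_CW n) \<mu> x) *
            ennreal (measure (density lborel (normal_density (spin_mean n x) \<sigma>)) E))"
  proof -
    have "ennreal (\<Sum>x\<in>spins n. ising_weight n \<beta> (Q_CW n) \<mu> x *
            measure (density lborel (normal_density (spin_mean n x) \<sigma>)) E)
       = (\<Sum>x\<in>spins n. ennreal (ising_weight n \<beta> (Q_CW n) \<mu> x *
            measure (density lborel (normal_density (spin_mean n x) \<sigma>)) E))"
      by (rule sum_ennreal[symmetric]) (simp add: wnn)
    also have "\<dots> = (\<Sum>x\<in>spins n. ennreal (ising_weight n \<beta> (Q_CW n) \<mu> x) *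
            ennreal (measure (density lborel (normal_density (spin_mean n x) \<sigma>)) E))"
      by (intro sum.cong refl ennreal_mult wnn measure_nonneg)
    finally show ?thesis .
  qed
  also have "\<dots> = (\<Sum>x\<in>spins n. \<integral>\<^sup>+ t. ennreal (ising_weight n \<beta> (Q_CW n) \<mu> x) *
            (ennreal (normal_density (spin_mean n x) \<sigma> t) * indicator E t) \<partial>lborel)"
    unfolding em using E by (intro sum.cong refl nn_integral_cmult[symmetric]) auto
  also have "\<dots> = (\<integral>\<^sup>+ t. (\<Sum>x\<in>spins n. ennreal (ising_weight n \<beta> (Q_CW n) \<mu> x) *
            (ennreal (normal_density (spin_mean n x) \<sigma> t) * indicator E t)) \<partial>lborel)"
    using E by (intro nn_integral_sum[symmetric]) auto
  also have "\<dots> = (\<integral>\<^sup>+ t. ennreal (G n \<beta> \<mu> t) * indicator E t \<partial>lborel)"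
  proof (intro nn_integral_cong)
    fix t
    have "(\<Sum>x\<in>spins n. ennreal (ising_weight n \<beta> (Q_CW n) \<mu> x) * ennreal (normal_density (spin_mean n x) \<sigma> t))
       = ennreal (G n \<beta> \<mu> t)"
    proof -
      have "(\<Sum>x\<in>spins n. ennreal (ising_weight n \<beta> (Q_CW n) \<mu> x) * ennreal (normal_density (spin_mean n x) \<sigma> t))
         = (\<Sum>x\<in>spins n. ennreal (ising_weight n \<beta> (Q_CW n) \<mu> x * normal_density (spin_mean n x) \<sigma> t))"
        by (intro sum.cong refl ennreal_mult[symmetric] wnn normal_density_nonneg)
      also have "\<dots> = ennreal (G n \<beta> \<mu> t)"
        unfolding G_def \<sigma>_def by (rule sum_ennreal) (simp add: wnn)
      finally show ?thesis .
    qed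
    then show "(\<Sum>x\<in>spins n. ennreal (ising_weight n \<beta> (Q_CW n) \<mu> x) *
            (ennreal (normal_density (spin_mean n x) \<sigma> t) * indicator E t)) = ennreal (G n \<beta> \<mu> t) * indicator E t"
      by (simp add: mult.assoc[symmetric] sum_distrib_right[symmetric])
  qed
  finally show ?thesis unfolding \<sigma>_def .
qed




lemma per_n:
  fixes \<beta> \<eta> \<delta> m a D :: real and B :: "real set" and \<mu> :: "nat \<Rightarrow> real"
  assumes b: "\<beta> > 0" and n: "n > 0" and eta: "\<eta> > 0" and dl: "\<delta> > 0"
    and gapH: "\<And>w. w \<in> B \<Longrightarrow> phi \<beta> w \<ge> phi \<beta> m + \<eta>"
    and nearH: "\<And>t. m \<le> t \<Longrightarrow> t \<le> m + \<delta> \<Longrightarrow> phi \<beta> t \<le> phi \<beta> m + \<eta>/2"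
    and Bm: "B \<in> sets borel"
    and a: "a = (\<Sum>i<n. \<bar>\<mu> i\<bar>)"
    and D: "D = integral\<^sup>L lborel (\<lambda>t. exp (- phi \<beta> t))"
  shows "W_prob n \<beta> (Q_CW n) \<mu> B \<le> exp (2*a - real n * \<eta>/2) * (exp (phi \<beta> m + \<eta>) * D / \<delta>)"
proof -
  define p where "p = phi \<beta> m"
  define meas where "meas x E = measure (density lborel (normal_density (spin_mean n x) (sqrt (1 / (real n * \<beta>))))) E" for x E
  define w where "w x = ising_weight n \<beta> (Q_CW n) \<mu> x" for x
  define P where "P E = (\<Sum>x\<in>spins n. w x * meas x E)" for E
  define I where "I = {m..m+\<delta>}"
  define Z where "Z = ising_Z n \<beta> (Q_CW n) \<mu>"
  define Kc where "Kc = KK n \<beta> * exp (a - (real n - 1) * (p + \<eta>))"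
  define Lc where "Lc = KK n \<beta> * exp (-a - real n * (p + \<eta>/2))"
  have wnn: "w x \<ge> 0" for x by (simp add: w_def ising_weight_def)
  have mnn: "meas x E \<ge> 0" for x E by (simp add: meas_def)
  have mle1: "meas x E \<le> 1" for x E
  proof -
    have sp: "sqrt (1 / (real n * \<beta>)) > 0" using n b by simp
    interpret prob_space "density lborel (normal_density (spin_mean n x) (sqrt (1 / (real n * \<beta>))))"
      using sp by (rule prob_space_normal_density)
    show ?thesis unfolding meas_def by (rule prob_le_1)
  qed
  have KKpos: "KK n \<beta> > 0" using n b by (simp add: KK_def)
  have Dint: "integrable lborel (\<lambda>t. exp (- phi \<beta> t))" using integrable_exp_neg_phi[OF b] .
  have D0: "D \<ge> 0" unfolding D by (rule integral_nonneg_AE) auto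
  have PB0: "P B \<ge> 0" unfolding P_def using wnn mnn by (intro sum_nonneg mult_nonneg_nonneg) auto
  have "ennreal (P B) = (\<integral>\<^sup>+ t. ennreal (G n \<beta> \<mu> t) * indicator B t \<partial>lborel)"
    unfolding P_def w_def meas_def by (rule P_eq[OF n b Bm])
  also have "\<dots> \<le> (\<integral>\<^sup>+ t. ennreal Kc * ennreal (exp (- phi \<beta> t)) \<partial>lborel)"
  proof (intro nn_integral_mono)
    fix t
    show "ennreal (G n \<beta> \<mu> t) * indicator B t \<le> ennreal Kc * ennreal (exp (- phi \<beta> t))"
    proof (cases "t \<in> B")
      case False then show ?thesis by simp
    next
      case True
      have g: "G n \<beta> \<mu> t \<le> KK n \<beta> * exp a * exp (- real n * phi \<beta> t)"
        by (rule G_bounds(2)[OF n b a])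
      have ph: "phi \<beta> t \<ge> p + \<eta>" using gapH[OF True] by (simp add: p_def)
      have n1: "real n - 1 \<ge> 0" using n by simp
      have "(real n - 1) * (p + \<eta>) \<le> (real n - 1) * phi \<beta> t" using mult_left_mono[OF ph n1] .
      then have "a - real n * phi \<beta> t \<le> a - (real n - 1) * (p + \<eta>) + (- phi \<beta> t)"
        by (simp add: algebra_simps)
      then have "exp (a - real n * phi \<beta> t) \<le> exp (a - (real n - 1) * (p + \<eta>) + (- phi \<beta> t))" by simp
      then have "KK n \<beta> * exp (a - real n * phi \<beta> t) \<le> KK n \<beta> * exp (a - (real n - 1) * (p + \<eta>) + (- phi \<beta> t))"
        using KKpos by simp
      also have "KK n \<beta> * exp (a - (real n - 1) * (p + \<eta>) + (- phi \<beta> t)) = Kc * exp (- phi \<beta> t)"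
        unfolding Kc_def by (subst exp_add) (simp only: mult_ac)
      also have "KK n \<beta> * exp (a - real n * phi \<beta> t) = KK n \<beta> * exp a * exp (- real n * phi \<beta> t)"
        by (simp add: exp_diff exp_minus divide_inverse mult_ac)
      finally have "G n \<beta> \<mu> t \<le> Kc * exp (- phi \<beta> t)" using g by linarith
      moreover have "Kc \<ge> 0" unfolding Kc_def using KKpos by simp
      ultimately show ?thesis using True by (simp add: ennreal_mult[symmetric])
    qed
  qed
  also have "\<dots> = ennreal Kc * (\<integral>\<^sup>+ t. ennreal (exp (- phi \<beta> t)) \<partial>lborel)"
    using borel_measurable_integrable[OF Dint] by (intro nn_integral_cmult) simp
  also have "(\<integral>\<^sup>+ t. ennreal (exp (- phi \<beta> t)) \<partial>lborel) = ennreal D"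
    unfolding D by (rule nn_integral_eq_integral[OF Dint]) simp
  finally have "ennreal (P B) \<le> ennreal (Kc * D)"
    using D0 KKpos by (simp add: Kc_def ennreal_mult)
  then have PB: "P B \<le> Kc * D" using D0 KKpos by (simp add: Kc_def)
  have Lc0: "Lc > 0" unfolding Lc_def using KKpos by simp
  have "(\<integral>\<^sup>+ t. ennreal Lc * indicator I t \<partial>lborel) = ennreal Lc * emeasure lborel I"
    by (rule nn_integral_cmult_indicator) (simp add: I_def)
  also have "emeasure lborel I = ennreal \<delta>" using dl by (simp add: I_def)
  finally have "ennreal (Lc * \<delta>) = (\<integral>\<^sup>+ t. ennreal Lc * indicator I t \<partial>lborel)"
    using dl Lc0 by (simp add: ennreal_mult)
  also have "\<dots> \<le> (\<integral>\<^sup>+ t. ennreal (G n \<beta> \<mu> t) * indicator I t \<partial>lborel)"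
  proof (intro nn_integral_mono)
    fix t
    show "ennreal Lc * indicator I t \<le> ennreal (G n \<beta> \<mu> t) * indicator I t"
    proof (cases "t \<in> I")
      case False then show ?thesis by simp
    next
      case True
      have g: "KK n \<beta> * exp (-a) * exp (- real n * phi \<beta> t) \<le> G n \<beta> \<mu> t"
        by (rule G_bounds(1)[OF n b a])
      have ph: "phi \<beta> t \<le> p + \<eta>/2" using nearH True by (simp add: p_def I_def)
      have "real n * phi \<beta> t \<le> real n * (p + \<eta>/2)" using mult_left_mono[OF ph] by simp
      then have "exp (-a - real n * (p + \<eta>/2)) \<le> exp (-a - real n * phi \<beta> t)" by simp
      then have "Lc \<le> KK n \<beta> * exp (-a - real n * phi \<beta> t)" unfolding Lc_def using KKpos by simp
      also have "\<dots> = KK n \<beta> * exp (-a) * exp (- real n * phi \<beta> t)"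
        by (simp add: exp_diff exp_minus divide_inverse mult_ac)
      finally have "Lc \<le> G n \<beta> \<mu> t" using g by linarith
      then show ?thesis using True by (simp add: ennreal_leI)
    qed
  qed
  also have "\<dots> = ennreal (P I)"
    unfolding P_def w_def meas_def by (rule P_eq[OF n b, symmetric]) (simp add: I_def)
  finally have PI: "Lc * \<delta> \<le> P I"
    using PB0 by (subst (asm) ennreal_le_iff) (auto simp: P_def intro!: sum_nonneg mult_nonneg_nonneg wnn mnn)
  have PIpos: "P I > 0" using PI Lc0 dl by (smt (verit) mult_pos_pos)
  have ZI: "P I \<le> Z"
    unfolding P_def Z_def ising_Z_def w_def[symmetric]
    using mle1 wnn by (intro sum_mono) (simp add: mult_left_le)
  have W: "W_prob n \<beta> (Q_CW n) \<mu> B = P B / Z"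
    unfolding W_prob_def P_def Z_def ising_prob_def w_def meas_def
    by (simp add: sum_divide_distrib)
  have "W_prob n \<beta> (Q_CW n) \<mu> B \<le> P B / P I"
    unfolding W using PB0 PIpos ZI by (intro divide_left_mono) auto
  also have "\<dots> \<le> (Kc * D) / (Lc * \<delta>)"
    using PB PI PIpos Lc0 dl D0 KKpos by (intro frac_le) (auto simp: Kc_def)
  also have "\<dots> = exp (2*a - real n * \<eta>/2) * (exp (p + \<eta>) * D / \<delta>)"
  proof -
    have "Kc / Lc = exp (a - (real n - 1) * (p + \<eta>)) / exp (-a - real n * (p + \<eta>/2))"
      unfolding Kc_def Lc_def using KKpos by simp
    also have "\<dots> = exp ((a - (real n - 1) * (p + \<eta>)) - (-a - real n * (p + \<eta>/2)))"
      by (rule exp_diff[symmetric])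
    also have "(a - (real n - 1) * (p + \<eta>)) - (-a - real n * (p + \<eta>/2)) = (2*a - real n * \<eta>/2) + (p + \<eta>)"
      by (simp add: algebra_simps)
    also have "exp \<dots> = exp (2*a - real n * \<eta>/2) * exp (p + \<eta>)" by (rule exp_add)
    finally have kl: "Kc / Lc = exp (2*a - real n * \<eta>/2) * exp (p + \<eta>)" .
    have "Kc * D / (Lc * \<delta>) = (Kc / Lc) * (D / \<delta>)" by simp
    then show ?thesis unfolding kl by simp
  qed
  finally show ?thesis unfolding p_def .
qed




theorem mainTheorem11:
  fixes \<beta> \<epsilon> :: real
  assumes "\<beta> > 1" and "\<epsilon> > 0"
  shows "\<exists>C>0. \<forall>(s :: nat \<Rightarrow> nat) (S :: nat \<Rightarrow> nat set) (A :: nat \<Rightarrow> real).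
     (\<forall>n. S n \<subseteq> {..<n} \<and> card (S n) = s n \<and> A n \<ge> 0) \<and>
     ((\<lambda>n. A n * real (s n) / real n) \<longlonglongrightarrow> 0) \<longrightarrow>
     (\<forall>\<^sub>F n in sequentially.
        W_prob n \<beta> (Q_CW n) (mu_S (S n) (A n))
          {w. \<not> (m_beta \<beta> - \<epsilon> \<le> \<bar>w\<bar> \<and> \<bar>w\<bar> \<le> m_beta \<beta> + \<epsilon>)}
        \<le> exp (- C * real n))"
proof -
  define m where "m = m_beta \<beta>"
  define B where "B = {w. \<not> (m_beta \<beta> - \<epsilon> \<le> \<bar>w\<bar> \<and> \<bar>w\<bar> \<le> m_beta \<beta> + \<epsilon>)}"
  have b0: "\<beta> > 0" using assms by simp
  obtain \<eta> where eta: "\<eta> > 0" and gapW: "\<And>w. \<not> (m - \<epsilon> \<le> \<bar>w\<bar> \<and> \<bar>w\<bar> \<le> m + \<epsilon>) \<Longrightarrow> phi \<beta> w \<ge> phi \<beta> m + \<eta>"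
    using gap[OF assms] unfolding m_def by blast
  have eta2: "\<eta>/2 > 0" using eta by simp
  obtain \<delta> where dl: "\<delta> > 0" and nr: "\<And>t. m \<le> t \<Longrightarrow> t \<le> m + \<delta> \<Longrightarrow> phi \<beta> t \<le> phi \<beta> m + \<eta>/2"
    using near[OF eta2, of m \<beta>] by blast
  define D where "D = integral\<^sup>L lborel (\<lambda>t. exp (- phi \<beta> t))"
  define K0 where "K0 = exp (phi \<beta> m + \<eta>) * D / \<delta>"
  have D0: "D \<ge> 0" unfolding D_def by (rule integral_nonneg_AE) auto
  have K00: "K0 \<ge> 0" unfolding K0_def using D0 dl by simp
  obtain N :: nat where N: "8 * K0 / \<eta> < real N" using reals_Archimedean2 by blast
  have Bm: "B \<in> sets borel" unfolding B_def by measurable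
  have gapB: "\<And>w. w \<in> B \<Longrightarrow> phi \<beta> w \<ge> phi \<beta> m + \<eta>" using gapW unfolding B_def m_def by blast
  show ?thesis
  proof (intro exI[of _ "\<eta>/4"] conjI allI impI)
    show "\<eta>/4 > 0" using eta by simp
    fix s :: "nat \<Rightarrow> nat" and S :: "nat \<Rightarrow> nat set" and A :: "nat \<Rightarrow> real"
    assume H: "(\<forall>n. S n \<subseteq> {..<n} \<and> card (S n) = s n \<and> A n \<ge> 0) \<and> ((\<lambda>n. A n * real (s n) / real n) \<longlonglongrightarrow> 0)"
    have ev1: "\<forall>\<^sub>F n in sequentially. A n * real (s n) / real n < \<eta>/16"
      using order_tendstoD(2)[OF conjunct2[OF H], of "\<eta>/16"] eta by simp
    have ev2: "\<forall>\<^sub>F n in sequentially. max N 1 \<le> n" by (rule eventually_ge_at_top)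
    show "\<forall>\<^sub>F n in sequentially. W_prob n \<beta> (Q_CW n) (mu_S (S n) (A n))
          {w. \<not> (m_beta \<beta> - \<epsilon> \<le> \<bar>w\<bar> \<and> \<bar>w\<bar> \<le> m_beta \<beta> + \<epsilon>)} \<le> exp (- (\<eta>/4) * real n)"
    proof (rule eventually_mono[OF eventually_conj[OF ev1 ev2]])
      fix n assume nn: "A n * real (s n) / real n < \<eta>/16 \<and> max N 1 \<le> n"
      have n0: "n > 0" using nn by simp
      have Sn: "S n \<subseteq> {..<n}" "card (S n) = s n" "A n \<ge> 0" using H by auto
      define a where "a = (\<Sum>i<n. \<bar>mu_S (S n) (A n) i\<bar>)"
      have "a = (\<Sum>i\<in>S n. \<bar>mu_S (S n) (A n) i\<bar>)"
        unfolding a_def by (rule sum.mono_neutral_right) (use Sn(1) in \<open>auto simp: mu_S_def\<close>)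
      also have "\<dots> = (\<Sum>i\<in>S n. A n)" using Sn(3) by (intro sum.cong) (auto simp: mu_S_def)
      finally have aeq: "a = A n * real (s n)" using Sn(2) by simp
      have W: "W_prob n \<beta> (Q_CW n) (mu_S (S n) (A n)) B \<le> exp (2*a - real n * \<eta>/2) * K0"
        unfolding K0_def
        by (rule per_n[OF b0 n0 eta dl gapB nr Bm a_def D_def])
      have "a < real n * \<eta> / 16" using nn n0 unfolding aeq by (simp add: field_simps)
      then have "2*a - real n * \<eta>/2 \<le> real n * \<eta> / 8 - real n * \<eta>/2" by linarith
      then have e1: "exp (2*a - real n * \<eta>/2) \<le> exp (real n * \<eta> / 8 - real n * \<eta>/2)" by (simp only: exp_le_cancel_iff)
      have "K0 < \<eta> * real N / 8" using N eta by (simp add: field_simps)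
      also have "\<dots> \<le> \<eta> * real n / 8" using nn eta by simp
      also have "\<dots> \<le> exp (real n * \<eta> / 8)"
      proof -
        have "1 + real n * \<eta> / 8 \<le> exp (real n * \<eta> / 8)" by (rule exp_ge_add_one_self)
        moreover have "\<eta> * real n / 8 = real n * \<eta> / 8" by simp
        ultimately show ?thesis by linarith
      qed
      finally have e2: "K0 \<le> exp (real n * \<eta> / 8)" by simp
      have "exp (2*a - real n * \<eta>/2) * K0 \<le> exp (real n * \<eta> / 8 - real n * \<eta>/2) * exp (real n * \<eta> / 8)"
        using e1 e2 K00 by (intro mult_mono) auto
      also have "\<dots> = exp (- (\<eta>/4) * real n)" by (subst exp_add[symmetric]) (simp add: algebra_simps)
      finally show "W_prob n \<beta> (Q_CW n) (mu_S (S n) (A n))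
          {w. \<not> (m_beta \<beta> - \<epsilon> \<le> \<bar>w\<bar> \<and> \<bar>w\<bar> \<le> m_beta \<beta> + \<epsilon>)} \<le> exp (- (\<eta>/4) * real n)"
        using W unfolding B_def by linarith
    qed
  qed
qed


end
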